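(* Let $\bar{\mathbf{H}}_{RT}\in\mathbb{C}^{N_R\times N_T}$, $\bar{\mathbf{H}}_{RI}\in\mathbb{C}^{N_R\times N_I}$, $\bar{\mathbf{H}}_{IT}\in\mathbb{C}^{N_I\times N_T}$, $Y_0>0$, $P_T>0$, and let $\mathbf{P}\in\mathbb{R}^{N_I\times N_I}$ be symmetric positive definite and $\mathbf{Q}\in\mathbb{R}^{N_I\times N_I}$ symmetric. For real symmetric $\mathbf{B}_I\in\mathbb{R}^{N_I\times N_I}$ let $\bar{\mathbf{B}}_I=Y_0\mathbf{P}^{-1/2}(\mathbf{B}_I+\mathbf{Q})\mathbf{P}^{-1/2}$ and $\bar{\boldsymbol{\Theta}}=(Y_0\mathbf{I}+\mathrm{i}\bar{\mathbf{B}}_I)^{-1}(Y_0\mathbf{I}-\mathrm{i}\bar{\mathbf{B}}_I)$. Then $$\sup\Big\{P_T\big|\mathbf{g}^H(\bar{\mathbf{H}}_{RT}+\bar{\mathbf{H}}_{RI}\bar{\boldsymbol{\Theta}}\bar{\mathbf{H}}_{IT})\mathbf{w}\big|^2:\ \mathbf{B}_I=\mathbf{B}_I^T\in\mathbb{R}^{N_I\times N_I},\ \mathbf{w}\in\mathbb{C}^{N_T},\ \mathbf{g}\in\mathbb{C}^{N_R},\ \|\mathbf{w}\|_2=\|\mathbf{g}\|_2=1\Big\}$$ $$=P_T\max\Big\{\|\bar{\mathbf{H}}_{RT}\mathbf{w}+\bar{\mathbf{H}}_{RI}\mathbf{u}\|_2^2:\ \mathbf{u}\in\mathbb{C}^{N_I},\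 \mathbf{w}\in\mathbb{C}^{N_T},\ \|\mathbf{u}\|_2=\|\bar{\mathbf{H}}_{IT}\mathbf{w}\|_2,\ \|\mathbf{w}\|_2=1\Big\}.$$
   Context: This is the receive-power maximization for a single-stream RIS-aided MIMO system with a fully-connected (lossless, reciprocal) RIS under the compact channel model $\bar{\mathbf{H}}_{RT}+\bar{\mathbf{H}}_{RI}\bar{\boldsymbol{\Theta}}\bar{\mathbf{H}}_{IT}$; $\mathbf{P}^{-1/2}$ denotes the inverse of the positive definite square root of $\mathbf{P}$, $\mathsf{i}$ the imaginary unit. *)

theory Defs
  imports "HOL-Analysis.Analysis"
begin

definition sym_real :: "real^'n^'n \<Rightarrow> bool" where
  "sym_real A \<longleftrightarrow> transpose A = A"

definition pos_def_real :: "real^'n^'n \<Rightarrow> bool" where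
  "pos_def_real A \<longleftrightarrow> sym_real A \<and> (\<forall>x. x \<noteq> 0 \<longrightarrow> x \<bullet> (A *v x) > 0)"

definition pd_sqrt :: "real^'n^'n \<Rightarrow> real^'n^'n" where
  "pd_sqrt P = (THE S. pos_def_real S \<and> S ** S = P)"

definition inv_sqrt :: "real^'n^'n \<Rightarrow> real^'n^'n" where
  "inv_sqrt P = matrix_inv (pd_sqrt P)"

definition Bbar :: "real \<Rightarrow> real^'n^'n \<Rightarrow> real^'n^'n \<Rightarrow> real^'n^'n \<Rightarrow> real^'n^'n" where
  "Bbar Y0 P Q B = Y0 *\<^sub>R (inv_sqrt P ** (B + Q) ** inv_sqrt P)"

definition Theta_bar :: "real \<Rightarrow> real^'n^'n \<Rightarrow> real^'n^'n \<Rightarrow> real^'n^'n \<Rightarrow> complex^'n^'n" where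
  "Theta_bar Y0 P Q B =
     matrix_inv (\<chi> i j. (if i = j then complex_of_real Y0 else 0) + \<i> * complex_of_real (Bbar Y0 P Q B $ i $ j))
     ** (\<chi> i j. (if i = j then complex_of_real Y0 else 0) - \<i> * complex_of_real (Bbar Y0 P Q B $ i $ j))"

definition herm_form :: "complex^'m \<Rightarrow> complex^'n^'m \<Rightarrow> complex^'n \<Rightarrow> complex" where
  "herm_form g M w = (\<Sum>i\<in>UNIV. cnj (g $ i) * ((M *v w) $ i))"

end

theory Submission
  imports Defs
begin


lemma sym_inner:
  fixes A :: "real^'n^'n"
  assumes "sym_real A"
  shows "x \<bullet> (A *v y) = (A *v x) \<bullet> y"
proof -
  have "x \<bullet> (A *v y) = (x v* A) \<bullet> y" by (simp add: dot_lmul_matrix)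
  also have "x v* A = transpose A *v x" by simp
  also have "\<dots> = A *v x" using assms by (simp add: sym_real_def)
  finally show ?thesis .
qed

lemma quad_zero:
  fixes c K :: real
  assumes "\<And>t. 2*t*c \<le> t^2*K"
  shows "c = 0"
proof -
  define t where "t = c / (\<bar>K\<bar>+1)"
  have pos: "\<bar>K\<bar>+1 > 0" by simp
  have "2*t*c \<le> t^2*K" by (rule assms)
  also have "t^2*K \<le> t^2*\<bar>K\<bar>" by (simp add: mult_left_mono)
  finally have h: "2*t*c \<le> t^2*\<bar>K\<bar>" .
  define L where "L = \<bar>K\<bar>+1"
  have L: "L > 0" "t * L = c" using pos by (simp_all add: L_def t_def)
  have "(2*t*c)*L^2 \<le> (t^2*\<bar>K\<bar>)*L^2" using h by (simp add: mult_right_mono)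
  hence "2*(t*L)*c*L \<le> (t*L)^2*\<bar>K\<bar>" by (simp add: algebra_simps power2_eq_square)
  hence "2*c*c*L \<le> c^2*\<bar>K\<bar>" using L by simp
  hence "c^2 * (\<bar>K\<bar> + 2) \<le> 0" by (simp add: L_def algebra_simps power2_eq_square)
  moreover have "\<bar>K\<bar> + 2 > 0" by simp
  ultimately have "c^2 \<le> 0" by (simp add: mult_le_0_iff)
  thus ?thesis by simp
qed

lemma max_eigen:
  fixes A :: "real^'n^'n"
  assumes sym: "sym_real A" and sub: "subspace V" and inv: "\<And>x. x \<in> V \<Longrightarrow> A *v x \<in> V"
    and ne: "V \<noteq> {0}"
  shows "\<exists>v\<in>V. norm v = 1 \<and> A *v v = (v \<bullet> (A *v v)) *\<^sub>R v"
proof -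
  define f where "f x = x \<bullet> (A *v x)" for x
  define K where "K = V \<inter> sphere 0 1"
  have "compact K" unfolding K_def
    by (simp add: closed_subspace compact_Int_closed compact_sphere inf_commute sub closed_Int_compact)
  obtain x0 where x0: "x0 \<in> V" "x0 \<noteq> 0" using ne sub subspace_0 by blast
  have "x0 /\<^sub>R norm x0 \<in> K" using x0 sub unfolding K_def
    by (simp add: subspace_scale)
  hence "K \<noteq> {}" by blast
  have "continuous_on K f" unfolding f_def
    by (intro continuous_intros continuous_on_id linear_continuous_on) (simp add: linear_linear)
  then obtain v where v: "v \<in> K" and vmax: "\<And>y. y \<in> K \<Longrightarrow> f y \<le> f v"
    using continuous_attains_sup[OF \<open>compact K\<close> \<open>K \<noteq> {}\<close>] by blast
  have vV: "v \<in> V" and nv: "norm v = 1" using v by (auto simp: K_def)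
  have hom: "f x \<le> f v * (norm x)^2" if "x \<in> V" for x
  proof (cases "x = 0")
    case True then show ?thesis by (simp add: f_def)
  next
    case False
    have "x /\<^sub>R norm x \<in> K" using that False sub unfolding K_def by (simp add: subspace_scale)
    hence "f (x /\<^sub>R norm x) \<le> f v" by (rule vmax)
    moreover have "f (x /\<^sub>R norm x) = f x / (norm x)^2"
      using False by (simp add: f_def matrix_vector_mult_scaleR power2_eq_square field_simps)
    ultimately show ?thesis using False by (simp add: divide_le_eq)
  qed
  have orth: "w \<bullet> (A *v v) = 0" if "w \<in> V" "v \<bullet> w = 0" for w
  proof (rule quad_zero)
    fix t :: real
    have "v + t *\<^sub>R w \<in> V" using vV that sub by (simp add: subspace_add subspace_scale)
    hence "f (v + t *\<^sub>R w) \<le> f v * (norm (v + t *\<^sub>R w))^2" by (rule hom)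
    moreover have "(norm (v + t *\<^sub>R w))^2 = 1 + t^2 * (norm w)^2"
    proof -
      have vv: "v \<bullet> v = 1" by (metis nv power2_norm_eq_inner one_power2)
      have "(norm (v + t *\<^sub>R w))^2 = (v + t*\<^sub>R w) \<bullet> (v + t*\<^sub>R w)" by (simp add: power2_norm_eq_inner)
      also have "\<dots> = v \<bullet> v + 2*t*(v \<bullet> w) + t^2*(w \<bullet> w)"
        by (simp add: inner_add_left inner_add_right inner_commute power2_eq_square algebra_simps)
      also have "\<dots> = 1 + t^2 * (norm w)^2" using vv that(2) by (simp add: power2_norm_eq_inner)
      finally show ?thesis .
    qed
    moreover have "f (v + t *\<^sub>R w) = f v + 2*t*(w \<bullet> (A *v v)) + t^2 * f w"
      using sym_inner[OF sym, of v w]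
      by (simp add: f_def matrix_vector_right_distrib matrix_vector_mult_scaleR inner_add_left inner_add_right
            inner_commute power2_eq_square algebra_simps)
    ultimately show "2*t*(w \<bullet> (A *v v)) \<le> t^2 * (f v * (norm w)^2 - f w)"
      by (simp add: algebra_simps)
  qed
  define w where "w = A *v v - (f v) *\<^sub>R v"
  have wV: "w \<in> V" using inv[OF vV] vV sub by (simp add: w_def subspace_diff subspace_scale)
  have "v \<bullet> w = 0" using nv by (simp add: w_def f_def inner_diff_right power2_norm_eq_inner[symmetric])
  hence "w \<bullet> (A *v v) = 0" using orth wV by blast
  hence "w \<bullet> w = 0" using \<open>v \<bullet> w = 0\<close> by (simp add: w_def inner_diff_right inner_commute)
  hence "w = 0" by simp
  thus ?thesis using vV nv by (auto simp: w_def f_def)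
qed

lemma spectral_sub:
  fixes A :: "real^'n^'n"
  assumes sym: "sym_real A"
  shows "subspace V \<Longrightarrow> (\<forall>x\<in>V. A *v x \<in> V) \<Longrightarrow> \<exists>B. finite B \<and> B \<subseteq> V \<and>
     (\<forall>b\<in>B. norm b = 1 \<and> A *v b = (b \<bullet> (A *v b)) *\<^sub>R b) \<and> pairwise orthogonal B \<and> V \<subseteq> span B"
proof (induction "dim V" arbitrary: V rule: less_induct)
  case less
  show ?case
  proof (cases "V = {0}")
    case True
    then show ?thesis by (intro exI[of _ "{}"]) auto
  next
    case False
    obtain v where vV: "v \<in> V" and nv: "norm v = 1" and ev: "A *v v = (v \<bullet> (A *v v)) *\<^sub>R v"
      using max_eigen[OF sym less.prems(1) _ False] less.prems(2) by blast
    have vv: "v \<bullet> v = 1" by (metis nv power2_norm_eq_inner one_power2)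
    define V' where "V' = {x\<in>V. v \<bullet> x = 0}"
    have sub': "subspace V'" using less.prems(1) unfolding V'_def subspace_def
      by (auto simp: inner_add_right)
    have inv': "\<forall>x\<in>V'. A *v x \<in> V'"
    proof
      fix x assume "x \<in> V'"
      hence "x \<in> V" "v \<bullet> x = 0" by (auto simp: V'_def)
      have "v \<bullet> (A *v x) = (A *v v) \<bullet> x" by (rule sym_inner[OF sym])
      also have "\<dots> = 0" using \<open>v \<bullet> x = 0\<close> by (subst ev) simp
      finally show "A *v x \<in> V'" using less.prems(2) \<open>x \<in> V\<close> by (auto simp: V'_def)
    qed
    have "V' \<subset> V"
    proof
      show "V' \<subseteq> V" by (auto simp: V'_def)
      show "V' \<noteq> V" using vV vv unfolding V'_def by (metis (mono_tags, lifting) mem_Collect_eq zero_neq_one)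
    qed
    moreover have sp: "span V' = V'" "span V = V" using sub' less.prems(1) by simp_all
    ultimately have "span V' \<subset> span V" by metis
    hence "dim V' < dim V" by (rule dim_psubset)
    then obtain B' where B': "finite B'" "B' \<subseteq> V'"
      "\<forall>b\<in>B'. norm b = 1 \<and> A *v b = (b \<bullet> (A *v b)) *\<^sub>R b" "pairwise orthogonal B'" "V' \<subseteq> span B'"
      using less.hyps[OF _ sub' inv'] by blast
    have vB': "v \<notin> B'" using B'(2) vv by (auto simp: V'_def)
    show ?thesis
    proof (intro exI[of _ "insert v B'"] conjI)
      show "finite (insert v B')" using B'(1) by simp
      show "insert v B' \<subseteq> V" using B'(2) vV by (auto simp: V'_def)
      show "\<forall>b\<in>insert v B'. norm b = 1 \<and> A *v b = (b \<bullet> (A *v b)) *\<^sub>R b" using B'(3) nv ev by auto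
      show "pairwise orthogonal (insert v B')" using B'(4) B'(2)
        by (auto simp: pairwise_insert V'_def orthogonal_def inner_commute)
      show "V \<subseteq> span (insert v B')"
      proof
        fix x assume xV: "x \<in> V"
        have "x - (v \<bullet> x) *\<^sub>R v \<in> V'" using xV vV vv less.prems(1)
          by (auto simp: V'_def subspace_diff subspace_scale inner_diff_right)
        hence "x - (v \<bullet> x) *\<^sub>R v \<in> span B'" using B'(5) by blast
        hence "x - (v \<bullet> x) *\<^sub>R v \<in> span (insert v B')" by (meson span_mono subset_insertI subsetD)
        moreover have "(v \<bullet> x) *\<^sub>R v \<in> span (insert v B')" by (simp add: span_base span_scale)
        ultimately have "(x - (v \<bullet> x) *\<^sub>R v) + (v \<bullet> x) *\<^sub>R v \<in> span (insert v B')" by (rule span_add)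
        thus "x \<in> span (insert v B')" by simp
      qed
    qed
  qed
qed

lemma spectral:
  fixes A :: "real^'n^'n"
  assumes sym: "sym_real A"
  shows "\<exists>B. finite B \<and> (\<forall>b\<in>B. norm b = 1 \<and> A *v b = (b \<bullet> (A *v b)) *\<^sub>R b)
     \<and> pairwise orthogonal B \<and> span B = UNIV"
  using spectral_sub[OF sym, of UNIV] by auto

lemma orthonormal_inner:
  assumes "\<forall>b\<in>B. norm b = 1" "pairwise orthogonal B" "b \<in> B" "c \<in> B"
  shows "c \<bullet> b = (if c = b then 1 else 0)"
proof (cases "c = b")
  case True
  then show ?thesis using assms(1,3) by (simp add: power2_norm_eq_inner[symmetric])
next
  case False
  then show ?thesis using assms(2,3,4) by (simp add: pairwise_def orthogonal_def)
qed

lemma matrix_eq_on_span: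
  fixes A C :: "real^'n^'n"
  assumes "span B = UNIV" "\<And>b. b \<in> B \<Longrightarrow> A *v b = C *v b"
  shows "A = C"
proof -
  have "A *v x = C *v x" for x
    by (rule linear_eq_on_span[OF matrix_vector_mul_linear matrix_vector_mul_linear, where B=B])
      (use assms in auto)
  thus ?thesis by (simp add: matrix_eq)
qed

lemma pd_sqrt_exists:
  fixes P :: "real^'n^'n"
  assumes pd: "pos_def_real P"
  shows "\<exists>S. pos_def_real S \<and> S ** S = P"
proof -
  have sym: "sym_real P" using pd by (simp add: pos_def_real_def)
  obtain B where fB: "finite B" and eB: "\<forall>b\<in>B. norm b = 1 \<and> P *v b = (b \<bullet> (P *v b)) *\<^sub>R b"
    and oB: "pairwise orthogonal B" and sB: "span B = UNIV"
    using spectral[OF sym] by blast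
  define l where "l b = b \<bullet> (P *v b)" for b
  have lpos: "l b > 0" if "b \<in> B" for b
  proof -
    have "b \<noteq> 0" using eB that by auto
    thus ?thesis using pd by (simp add: l_def pos_def_real_def)
  qed
  have nB: "\<forall>b\<in>B. norm b = 1" using eB by simp
  have Pb: "P *v b = l b *\<^sub>R b" if "b \<in> B" for b using eB that by (simp add: l_def)
  define S :: "real^'n^'n" where "S = (\<chi> i j. \<Sum>b\<in>B. sqrt (l b) * b$i * b$j)"
  have Sx: "S *v x = (\<Sum>b\<in>B. (sqrt (l b) * (b \<bullet> x)) *\<^sub>R b)" for x
  proof -
    have "(S *v x) $ i = (\<Sum>b\<in>B. (sqrt (l b) * (b \<bullet> x)) *\<^sub>R b) $ i" for i
    proof -
      have "(S *v x) $ i = (\<Sum>j\<in>UNIV. (\<Sum>b\<in>B. sqrt (l b) * b$i * b$j) * x$j)"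
        unfolding S_def by (simp add: matrix_vector_mult_def)
      also have "\<dots> = (\<Sum>j\<in>UNIV. \<Sum>b\<in>B. sqrt (l b) * b$i * (b$j * x$j))"
        by (simp add: sum_distrib_right mult.assoc)
      also have "\<dots> = (\<Sum>b\<in>B. \<Sum>j\<in>UNIV. sqrt (l b) * b$i * (b$j * x$j))"
        by (rule sum.swap)
      also have "\<dots> = (\<Sum>b\<in>B. sqrt (l b) * b$i * (b \<bullet> x))"
        by (simp add: inner_vec_def sum_distrib_left)
      also have "\<dots> = (\<Sum>b\<in>B. (sqrt (l b) * (b \<bullet> x)) *\<^sub>R b) $ i"
        by (simp add: sum_component mult_ac)
      finally show ?thesis .
    qed
    thus ?thesis by (simp add: vec_eq_iff)
  qed
  have Sb: "S *v b = sqrt (l b) *\<^sub>R b" if "b \<in> B" for b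
  proof -
    have "S *v b = (\<Sum>c\<in>B. (if c = b then sqrt (l b) *\<^sub>R b else 0))"
      unfolding Sx using orthonormal_inner[OF nB oB that] by (intro sum.cong) auto
    also have "\<dots> = sqrt (l b) *\<^sub>R b" using that fB by (simp add: sum.delta')
    finally show ?thesis .
  qed
  have "S ** S = P"
  proof (rule matrix_eq_on_span[OF sB])
    fix b assume b: "b \<in> B"
    have "(S ** S) *v b = S *v (S *v b)" by (simp add: matrix_vector_mul_assoc)
    also have "\<dots> = (sqrt (l b) * sqrt (l b)) *\<^sub>R b" using b by (simp add: Sb matrix_vector_mult_scaleR)
    also have "\<dots> = P *v b" using lpos[OF b] Pb[OF b] by simp
    finally show "(S ** S) *v b = P *v b" .
  qed
  moreover have "pos_def_real S"
    unfolding pos_def_real_def sym_real_def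
  proof (intro conjI allI impI)
    show "transpose S = S" unfolding S_def by (simp add: transpose_def vec_eq_iff mult_ac)
    fix x :: "real^'n" assume x0: "x \<noteq> 0"
    have xSx: "x \<bullet> (S *v x) = (\<Sum>b\<in>B. sqrt (l b) * (b \<bullet> x)^2)"
      unfolding Sx by (simp add: inner_sum_right power2_eq_square mult_ac inner_commute)
    have nn: "\<forall>b\<in>B. 0 \<le> sqrt (l b) * (b \<bullet> x)^2" using lpos by (simp add: less_imp_le)
    show "x \<bullet> (S *v x) > 0"
    proof (rule ccontr)
      assume "\<not> x \<bullet> (S *v x) > 0"
      moreover have "0 \<le> (\<Sum>b\<in>B. sqrt (l b) * (b \<bullet> x)^2)" by (rule sum_nonneg) (use nn in auto)
      ultimately have "(\<Sum>b\<in>B. sqrt (l b) * (b \<bullet> x)^2) = 0"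
        using xSx by linarith
      moreover have "(\<Sum>b\<in>B. sqrt (l b) * (b \<bullet> x)^2) = 0 \<longleftrightarrow> (\<forall>b\<in>B. sqrt (l b) * (b \<bullet> x)^2 = 0)"
        by (rule sum_nonneg_eq_0_iff[OF fB]) (use nn in auto)
      ultimately have z: "\<forall>b\<in>B. sqrt (l b) * (b \<bullet> x)^2 = 0" by simp
      have "\<forall>b\<in>B. b \<bullet> x = 0"
      proof
        fix b assume b: "b \<in> B"
        have "sqrt (l b) > 0" using lpos[OF b] by simp
        moreover have "sqrt (l b) * (b \<bullet> x)^2 = 0" using z b by blast
        ultimately show "b \<bullet> x = 0" by simp
      qed
      hence "orthogonal x x"
        using orthogonal_to_span[of x B x] sB by (auto simp: orthogonal_def inner_commute)
      thus False using x0 by (simp add: orthogonal_def)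
    qed
  qed
  ultimately show ?thesis by blast
qed

lemma pd_sqrt_unique:
  fixes S T :: "real^'n^'n"
  assumes S: "pos_def_real S" and T: "pos_def_real T" and eq: "S ** S = T ** T"
  shows "S = T"
proof -
  define D where "D = S - T"
  have symS: "sym_real S" and symT: "sym_real T" using S T by (auto simp: pos_def_real_def)
  have symD: "sym_real D" using symS symT by (simp add: sym_real_def D_def transpose_def vec_eq_iff)
  obtain B where eB: "\<forall>b\<in>B. norm b = 1 \<and> D *v b = (b \<bullet> (D *v b)) *\<^sub>R b"
    and sB: "span B = UNIV"
    using spectral[OF symD] by blast
  have "D = 0"
  proof (rule matrix_eq_on_span[OF sB])
    fix b assume b: "b \<in> B"
    define d where "d = b \<bullet> (D *v b)"
    have Db: "D *v b = d *\<^sub>R b" using eB b by (simp add: d_def)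
    have b0: "b \<noteq> 0" using eB b by auto
    have "S *v (D *v b) = S *v (S *v b) - S *v (T *v b)"
      by (simp add: D_def matrix_vector_mult_diff_rdistrib matrix_vector_mult_diff_distrib)
    moreover have "D *v (T *v b) = S *v (T *v b) - T *v (T *v b)"
      by (simp add: D_def matrix_vector_mult_diff_rdistrib)
    ultimately have "S *v (D *v b) + D *v (T *v b) = S *v (S *v b) - T *v (T *v b)" by simp
    also have "\<dots> = (S ** S) *v b - (T ** T) *v b" by (simp add: matrix_vector_mul_assoc)
    finally have z: "S *v (D *v b) + D *v (T *v b) = 0" using eq by simp
    have "b \<bullet> (S *v (D *v b)) = d * (b \<bullet> (S *v b))" by (simp add: Db matrix_vector_mult_scaleR)
    moreover have "b \<bullet> (D *v (T *v b)) = d * (b \<bullet> (T *v b))"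
      using sym_inner[OF symD, of b "T *v b"] by (simp add: Db)
    ultimately have "d * (b \<bullet> (S *v b) + b \<bullet> (T *v b)) = 0"
      using arg_cong[OF z, of "\<lambda>y. b \<bullet> y"] by (simp add: inner_add_right algebra_simps)
    moreover have "b \<bullet> (S *v b) + b \<bullet> (T *v b) > 0" using S T b0 by (simp add: pos_def_real_def add_pos_pos)
    ultimately have "d = 0" by simp
    thus "D *v b = 0 *v b" using Db by simp
  qed
  thus ?thesis by (simp add: D_def)
qed

lemma pd_sqrt:
  fixes P :: "real^'n^'n"
  assumes "pos_def_real P"
  shows "pos_def_real (pd_sqrt P) \<and> pd_sqrt P ** pd_sqrt P = P"
proof -
  have "\<exists>!S. pos_def_real S \<and> S ** S = P"
    using pd_sqrt_exists[OF assms] pd_sqrt_unique by metis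
  thus ?thesis unfolding pd_sqrt_def by (rule theI')
qed



definition cm :: "real^'n^'n \<Rightarrow> complex^'n^'n" where
  "cm X = (\<chi> i j. complex_of_real (X$i$j))"
definition Apl :: "real \<Rightarrow> real^'n^'n \<Rightarrow> complex^'n^'n" where
  "Apl Y0 X = (\<chi> i j. (if i = j then complex_of_real Y0 else 0) + \<i> * complex_of_real (X $ i $ j))"
definition Ami :: "real \<Rightarrow> real^'n^'n \<Rightarrow> complex^'n^'n" where
  "Ami Y0 X = (\<chi> i j. (if i = j then complex_of_real Y0 else 0) - \<i> * complex_of_real (X $ i $ j))"
definition theta :: "real \<Rightarrow> real^'n^'n \<Rightarrow> complex^'n^'n" where
  "theta Y0 X = matrix_inv (Apl Y0 X) ** Ami Y0 X"

lemma Theta_bar_theta: "Theta_bar Y0 P Q B = theta Y0 (Bbar Y0 P Q B)"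
  unfolding Theta_bar_def theta_def Apl_def Ami_def by simp

definition re_v :: "complex^'n \<Rightarrow> real^'n" where "re_v z = (\<chi> i. Re (z$i))"
definition im_v :: "complex^'n \<Rightarrow> real^'n" where "im_v z = (\<chi> i. Im (z$i))"
definition cvec :: "real^'n \<Rightarrow> real^'n \<Rightarrow> complex^'n" where "cvec x y = (\<chi> i. Complex (x$i) (y$i))"

lemma norm_sq_real: "(norm (x::real^'n))^2 = (\<Sum>i\<in>UNIV. (x$i)^2)"
  by (simp add: norm_vec_def L2_set_def sum_nonneg)

lemma norm_sq_cplx: "(norm (z::complex^'n))^2 = (norm (re_v z))^2 + (norm (im_v z))^2"
proof -
  have "(norm z)^2 = (\<Sum>i\<in>UNIV. (cmod (z$i))^2)"
    by (simp add: norm_vec_def L2_set_def sum_nonneg)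
  also have "\<dots> = (\<Sum>i\<in>UNIV. (Re (z$i))^2 + (Im (z$i))^2)" by (simp add: cmod_power2)
  also have "\<dots> = (norm (re_v z))^2 + (norm (im_v z))^2"
    by (simp add: norm_sq_real re_v_def im_v_def sum.distrib)
  finally show ?thesis .
qed

lemma cplx_eqI: "re_v z = re_v w \<Longrightarrow> im_v z = im_v w \<Longrightarrow> z = w"
  by (simp add: re_v_def im_v_def vec_eq_iff complex_eq_iff)

lemma re_v_simps[simp]: "re_v (z + w) = re_v z + re_v w" "re_v (z - w) = re_v z - re_v w"
  "re_v (cvec x y) = x" "im_v (cvec x y) = y"
  "im_v (z + w) = im_v z + im_v w" "im_v (z - w) = im_v z - im_v w"
  "re_v 0 = 0" "im_v 0 = 0"
  by (simp_all add: re_v_def im_v_def cvec_def vec_eq_iff)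

lemma cm_mult: "re_v (cm X *v z) = X *v re_v z" "im_v (cm X *v z) = X *v im_v z"
  by (simp_all add: re_v_def im_v_def vec_eq_iff matrix_vector_mult_def cm_def Re_sum Im_sum mult.commute)

lemma sum_if_delta: "(\<Sum>j\<in>UNIV. (if i = j then c else 0) * f j) = (c::complex) * f (i::'n::finite)"
proof -
  have "(\<Sum>j\<in>UNIV. (if i = j then c else 0) * f j) = (\<Sum>j\<in>UNIV. if i = j then c * f j else 0)"
    by (rule sum.cong) auto
  thus ?thesis by (simp add: sum.delta)
qed

lemma Apl_mv: "Apl Y0 X *v z = (\<chi> i. complex_of_real Y0 * z$i + \<i> * (cm X *v z)$i)"
proof -
  have "(Apl Y0 X *v z) $ i = complex_of_real Y0 * z$i + \<i> * (cm X *v z)$i" for i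
  proof -
    have "(Apl Y0 X *v z) $ i = (\<Sum>j\<in>UNIV. (if i = j then complex_of_real Y0 * z$j else 0)) + (\<Sum>j\<in>UNIV. \<i> * (complex_of_real (X$i$j) * z$j))"
      by (simp add: Apl_def matrix_vector_mult_def distrib_right sum.distrib mult.assoc sum_if_delta)
    also have "\<dots> = complex_of_real Y0 * z$i + \<i> * (cm X *v z)$i"
      by (simp add: cm_def matrix_vector_mult_def sum_distrib_left)
    finally show ?thesis .
  qed
  thus ?thesis by (simp add: vec_eq_iff)
qed

lemma Ami_mv: "Ami Y0 X *v z = (\<chi> i. complex_of_real Y0 * z$i - \<i> * (cm X *v z)$i)"
proof -
  have "(Ami Y0 X *v z) $ i = complex_of_real Y0 * z$i - \<i> * (cm X *v z)$i" for i
  proof -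
    have "(Ami Y0 X *v z) $ i = (\<Sum>j\<in>UNIV. (if i = j then complex_of_real Y0 * z$j else 0)) - (\<Sum>j\<in>UNIV. \<i> * (complex_of_real (X$i$j) * z$j))"
      by (simp add: Ami_def matrix_vector_mult_def left_diff_distrib sum_subtractf mult.assoc sum_if_delta)
    also have "\<dots> = complex_of_real Y0 * z$i - \<i> * (cm X *v z)$i"
      by (simp add: cm_def matrix_vector_mult_def sum_distrib_left)
    finally show ?thesis .
  qed
  thus ?thesis by (simp add: vec_eq_iff)
qed

lemma Apl_mult: "re_v (Apl Y0 X *v z) = Y0 *\<^sub>R re_v z - X *v im_v z"
   "im_v (Apl Y0 X *v z) = Y0 *\<^sub>R im_v z + X *v re_v z"
  using cm_mult[of X z] by (simp_all add: Apl_mv re_v_def im_v_def vec_eq_iff)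

lemma Ami_mult: "re_v (Ami Y0 X *v z) = Y0 *\<^sub>R re_v z + X *v im_v z"
   "im_v (Ami Y0 X *v z) = Y0 *\<^sub>R im_v z - X *v re_v z"
  using cm_mult[of X z] by (simp_all add: Ami_mv re_v_def im_v_def vec_eq_iff)

lemma Ami_Apl: "Ami Y0 X = Apl Y0 (-X)"
  by (simp add: Ami_def Apl_def vec_eq_iff)

lemma sym_neg: "sym_real X \<Longrightarrow> sym_real (-X)"
  by (simp add: sym_real_def transpose_def vec_eq_iff)

lemma norm_Apl:
  assumes sym: "sym_real X"
  shows "(norm (Apl Y0 X *v z))^2 = Y0^2 * (norm z)^2 + (norm (X *v re_v z))^2 + (norm (X *v im_v z))^2"
proof -
  define r where "r = re_v z"
  define m where "m = im_v z"
  have c: "r \<bullet> (X *v m) = m \<bullet> (X *v r)" using sym_inner[OF sym, of r m] by (simp add: inner_commute)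
  have "(norm (Apl Y0 X *v z))^2 = (norm (Y0 *\<^sub>R r - X *v m))^2 + (norm (Y0 *\<^sub>R m + X *v r))^2"
    by (simp add: norm_sq_cplx Apl_mult r_def m_def)
  also have "\<dots> = Y0^2 * ((norm r)^2 + (norm m)^2) + (norm (X *v r))^2 + (norm (X *v m))^2
     - 2 * Y0 * (r \<bullet> (X *v m)) + 2 * Y0 * (m \<bullet> (X *v r))"
    by (simp only: power2_norm_eq_inner)
      (simp add: inner_diff_left inner_diff_right inner_add_left inner_add_right
        inner_commute algebra_simps power2_eq_square)
  also have "\<dots> = Y0^2 * (norm z)^2 + (norm (X *v re_v z))^2 + (norm (X *v im_v z))^2"
    using c by (simp add: norm_sq_cplx r_def m_def)
  finally show ?thesis .
qed

lemma neg_mv: "(-X) *v v = - (X *v (v::real^'n))"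
  by (simp add: matrix_vector_mult_def vec_eq_iff sum_negf)

lemma norm_Ami:
  assumes sym: "sym_real X"
  shows "(norm (Ami Y0 X *v z))^2 = Y0^2 * (norm z)^2 + (norm (X *v re_v z))^2 + (norm (X *v im_v z))^2"
  using norm_Apl[OF sym_neg[OF sym], of Y0 z] by (simp add: Ami_Apl neg_mv)

lemma Apl_inv:
  assumes sym: "sym_real X" and Y0: "Y0 > 0"
  shows "Apl Y0 X ** matrix_inv (Apl Y0 X) = mat 1 \<and> matrix_inv (Apl Y0 X) ** Apl Y0 X = mat 1"
proof -
  have "\<forall>x. Apl Y0 X *v x = 0 \<longrightarrow> x = 0"
  proof (intro allI impI)
    fix x assume "Apl Y0 X *v x = 0"
    hence "Y0^2 * (norm x)^2 + (norm (X *v re_v x))^2 + (norm (X *v im_v x))^2 = 0"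
      using norm_Apl[OF sym, of Y0 x] by simp
    hence "Y0^2 * (norm x)^2 = 0"
      by (smt (verit) zero_le_power2 mult_nonneg_nonneg)
    thus "x = 0" using Y0 by simp
  qed
  hence "\<exists>B. B ** Apl Y0 X = mat 1" using matrix_left_invertible_ker by blast
  hence "invertible (Apl Y0 X)" using invertible_left_inverse by blast
  hence "\<exists>A'. Apl Y0 X ** A' = mat 1 \<and> A' ** Apl Y0 X = mat 1" by (simp add: invertible_def)
  thus ?thesis unfolding matrix_inv_def by (rule someI_ex)
qed

lemma Ami_eq: "Ami Y0 X *v w = complex_of_real (2*Y0) *s w - Apl Y0 X *v w"
  by (simp add: Ami_mv Apl_mv vec_eq_iff)

lemma Ami_Apl_comm: "Ami Y0 X *v (Apl Y0 X *v y) = Apl Y0 X *v (Ami Y0 X *v y)"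
  by (simp add: Ami_eq vector_scalar_commute matrix_vector_mult_diff_distrib)

lemma theta_isometry:
  assumes sym: "sym_real X" and Y0: "Y0 > 0"
  shows "norm (theta Y0 X *v z) = norm z"
proof -
  let ?A = "Apl Y0 X" and ?C = "Ami Y0 X"
  define y where "y = matrix_inv ?A *v z"
  have Ay: "?A *v y = z" using Apl_inv[OF sym Y0] by (simp add: y_def matrix_vector_mul_assoc)
  have "theta Y0 X *v z = matrix_inv ?A *v (?C *v (?A *v y))"
    by (simp only: theta_def Ay matrix_vector_mul_assoc)
  also have "\<dots> = matrix_inv ?A *v (?A *v (?C *v y))" by (simp only: Ami_Apl_comm)
  also have "\<dots> = (matrix_inv ?A ** ?A) *v (?C *v y)" by (rule matrix_vector_mul_assoc)
  also have "\<dots> = ?C *v y" using Apl_inv[OF sym Y0] by simp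
  finally have "theta Y0 X *v z = ?C *v y" .
  moreover have "(norm (?C *v y))^2 = (norm (?A *v y))^2" using norm_Apl[OF sym] norm_Ami[OF sym] by simp
  ultimately show ?thesis using Ay by simp
qed

lemma theta_solve:
  assumes sym: "sym_real X" and Y0: "Y0 > 0" and eq: "Ami Y0 X *v a = Apl Y0 X *v b"
  shows "theta Y0 X *v a = b"
proof -
  have "theta Y0 X *v a = matrix_inv (Apl Y0 X) *v (Apl Y0 X *v b)"
    by (simp only: theta_def eq flip: matrix_vector_mul_assoc)
  also have "\<dots> = (matrix_inv (Apl Y0 X) ** Apl Y0 X) *v b" by (rule matrix_vector_mul_assoc)
  also have "\<dots> = b" using Apl_inv[OF sym Y0] by simp
  finally show ?thesis .
qed



definition outer :: "real^'n \<Rightarrow> real^'n \<Rightarrow> real^'n^'n" where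
  "outer u v = (\<chi> i l. u$i * v$l)"

lemma outer_mv: "outer u v *v x = (v \<bullet> x) *\<^sub>R u"
  by (simp add: outer_def vec_eq_iff matrix_vector_mult_def inner_vec_def sum_distrib_left mult_ac)

lemma solve_bi:
  fixes p1 p2 q1 q2 f1 f2 :: "real^'n"
  assumes "f1 \<bullet> p1 = 1" "f1 \<bullet> p2 = 0" "f2 \<bullet> p1 = 0" "f2 \<bullet> p2 = 1" and c: "p1 \<bullet> q2 = p2 \<bullet> q1"
  shows "\<exists>X. sym_real X \<and> X *v p1 = q1 \<and> X *v p2 = q2"
proof -
  define X where "X = outer q1 f1 + outer f1 q1 + outer q2 f2 + outer f2 q2
     - outer ((p1 \<bullet> q1) *\<^sub>R f1) f1 - outer ((p1 \<bullet> q2) *\<^sub>R f1) f2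
     - outer ((p2 \<bullet> q1) *\<^sub>R f2) f1 - outer ((p2 \<bullet> q2) *\<^sub>R f2) f2"
  have c': "q2 \<bullet> p1 = q1 \<bullet> p2" using c by (simp add: inner_commute)
  have "sym_real X" unfolding sym_real_def X_def
    by (simp add: outer_def transpose_def vec_eq_iff c algebra_simps)
  moreover have "X *v p1 = q1"
    unfolding X_def using assms c'
    by (simp add: matrix_vector_mult_add_rdistrib matrix_vector_mult_diff_rdistrib outer_mv inner_commute)
  moreover have "X *v p2 = q2"
    unfolding X_def using assms c'
    by (simp add: matrix_vector_mult_add_rdistrib matrix_vector_mult_diff_rdistrib outer_mv inner_commute)
  ultimately show ?thesis by blast
qed

lemma solve2:
  fixes p1 p2 q1 q2 :: "real^'n"
  assumes jk: "j \<noteq> k" and d: "p1$j*p2$k - p1$k*p2$j \<noteq> 0" and c: "p1 \<bullet> q2 = p2 \<bullet> q1"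
  shows "\<exists>X. sym_real X \<and> X *v p1 = q1 \<and> X *v p2 = q2"
proof -
  define d where "d = p1$j*p2$k - p1$k*p2$j"
  define f1 where "f1 = (1/d) *\<^sub>R (p2$k *\<^sub>R axis j 1 - p2$j *\<^sub>R axis k (1::real))"
  define f2 where "f2 = (1/d) *\<^sub>R (p1$j *\<^sub>R axis k 1 - p1$k *\<^sub>R axis j (1::real))"
  have d0: "d \<noteq> 0" unfolding d_def by (rule d)
  show ?thesis
  proof (rule solve_bi[OF _ _ _ _ c])
    have e1: "f1 \<bullet> v = (1/d) * (p2$k * v$j - p2$j * v$k)" for v
      by (simp add: f1_def inner_diff_left inner_axis')
    have e2: "f2 \<bullet> v = (1/d) * (p1$j * v$k - p1$k * v$j)" for v
      by (simp add: f2_def inner_diff_left inner_axis')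
    have "p2$k * p1$j - p2$j * p1$k = d" by (simp add: d_def mult.commute)
    thus "f1 \<bullet> p1 = 1" using d0 by (simp add: e1)
    show "f1 \<bullet> p2 = 0" by (simp add: e1 mult.commute)
    show "f2 \<bullet> p1 = 0" by (simp add: e2 mult.commute)
    have "p1$j * p2$k - p1$k * p2$j = d" by (simp add: d_def)
    thus "f2 \<bullet> p2 = 1" using d0 by (simp add: e2)
  qed
qed

lemma solve1:
  fixes p1 p2 q1 q2 :: "real^'n"
  assumes one: "\<And>i. i = j" and d: "(p1$j)^2 + (p2$j)^2 \<noteq> 0" and c: "p1 \<bullet> q2 = p2 \<bullet> q1"
  shows "\<exists>X. sym_real X \<and> X *v p1 = q1 \<and> X *v p2 = q2"
proof -
  have U: "UNIV = {j}" using one by auto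
  have inn: "u \<bullet> v = u$j * v$j" for u v :: "real^'n" by (simp add: inner_vec_def U)
  have veq: "u = v" if "u$j = v$j" for u v :: "real^'n" using that one by (metis vec_eq_iff)
  define x where "x = (p1$j * q1$j + p2$j * q2$j) / ((p1$j)^2 + (p2$j)^2)"
  define X where "X = outer (x *\<^sub>R axis j 1) (axis j (1::real))"
  have cj: "p1$j * q2$j = p2$j * q1$j" using c by (simp add: inn)
  have "sym_real X" unfolding sym_real_def X_def
    by (simp add: outer_def transpose_def vec_eq_iff axis_def)
  moreover have "X *v p1 = q1"
  proof (rule veq)
    have "(X *v p1)$j = x * p1$j" by (simp add: X_def outer_mv inner_axis')
    also have "\<dots> = q1$j" using d cj unfolding x_def
      by (simp add: field_simps power2_eq_square)
    finally show "(X *v p1)$j = q1$j" .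
  qed
  moreover have "X *v p2 = q2"
  proof (rule veq)
    have "(X *v p2)$j = x * p2$j" by (simp add: X_def outer_mv inner_axis')
    also have "\<dots> = q2$j" using d cj unfolding x_def
      by (simp add: field_simps power2_eq_square)
    finally show "(X *v p2)$j = q2$j" .
  qed
  ultimately show ?thesis by blast
qed

lemma three_pt:
  fixes c2 c1 c0 d :: real
  assumes "c2 \<noteq> 0" "d \<noteq> 0"
  shows "\<exists>s\<in>{d, d/2, d/3}. c2* s^2 + c1* s + c0 \<noteq> 0"
proof (rule ccontr)
  assume "\<not> ?thesis"
  hence e: "c2*d^2 + c1*d + c0 = 0" "c2*(d/2)^2 + c1*(d/2) + c0 = 0" "c2*(d/3)^2 + c1*(d/3) + c0 = 0" by auto
  have "c2*d^2/3 = (c2*d^2 + c1*d + c0) - 4*(c2*(d/2)^2 + c1*(d/2) + c0) + 3*(c2*(d/3)^2 + c1*(d/3) + c0)"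
    by (simp add: field_simps power2_eq_square)
  also have "\<dots> = 0" using e by simp
  finally show False using assms by simp
qed

lemma two_pt:
  fixes u v w z d :: real
  assumes "w^2 + z^2 \<noteq> 0" "d \<noteq> 0"
  shows "\<exists>s\<in>{d, d/2}. (u + s*w)^2 + (v + s*z)^2 \<noteq> 0"
proof (rule ccontr)
  assume "\<not> ?thesis"
  hence "(u + d*w)^2 + (v + d*z)^2 = 0" "(u + d/2*w)^2 + (v + d/2*z)^2 = 0" by auto
  hence e: "u + d*w = 0" "v + d*z = 0" "u + d/2*w = 0" "v + d/2*z = 0"
    by (simp_all add: sum_power2_eq_zero_iff)
  have "d*w = 0" using e(1) e(3) by linarith
  moreover have "d*z = 0" using e(2) e(4) by linarith
  ultimately show False using assms by simp
qed
lemma dummy: True by simp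
lemma dummy2: True
  by simp

lemma key_real:
  fixes a1 a2 b1 b2 :: "real^'n"
  assumes nrm: "(norm a1)^2 + (norm a2)^2 = (norm b1)^2 + (norm b2)^2" and eps: "\<epsilon> > 0"
  shows "\<exists>t1 t2 X. sym_real X \<and> (norm t1)^2 + (norm t2)^2 < \<epsilon>^2
     \<and> X *v (a1 + b1 + 2 *\<^sub>R t1) = Y0 *\<^sub>R (a2 - b2) \<and> X *v (a2 + b2 + 2 *\<^sub>R t2) = (-Y0) *\<^sub>R (a1 - b1)"
proof -
  define m1 where "m1 = a1 - b1"
  define m2 where "m2 = a2 - b2"
  define p1 where "p1 = a1 + b1"
  define p2 where "p2 = a2 + b2"
  define q1 where "q1 = Y0 *\<^sub>R m2"
  define q2 where "q2 = (-Y0) *\<^sub>R m1"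
  have pm: "p1 \<bullet> m1 + p2 \<bullet> m2 = 0"
    using nrm by (simp add: p1_def p2_def m1_def m2_def inner_add_left inner_diff_right inner_commute
        power2_norm_eq_inner algebra_simps)
  have compat: "(p1 + 2 *\<^sub>R t1) \<bullet> q2 = (p2 + 2 *\<^sub>R t2) \<bullet> q1" if "t1 \<bullet> m1 + t2 \<bullet> m2 = 0" for t1 t2
  proof -
    have "(p1 + 2 *\<^sub>R t1) \<bullet> q2 + (-((p2 + 2 *\<^sub>R t2) \<bullet> q1)) = -Y0 * ((p1 \<bullet> m1 + p2 \<bullet> m2) + 2 * (t1 \<bullet> m1 + t2 \<bullet> m2))"
      by (simp add: q1_def q2_def inner_add_left algebra_simps)
    also have "\<dots> = 0" using pm that by simp
    finally show ?thesis by simp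
  qed
  have goal: "\<exists>t1 t2 X. sym_real X \<and> (norm t1)^2 + (norm t2)^2 < \<epsilon>^2
     \<and> X *v (p1 + 2 *\<^sub>R t1) = q1 \<and> X *v (p2 + 2 *\<^sub>R t2) = q2"
  proof (cases "m1 = 0 \<and> m2 = 0")
    case True
    show ?thesis
      by (rule exI[of _ 0], rule exI[of _ 0], rule exI[of _ 0]) (use True eps in \<open>simp add: q1_def q2_def sym_real_def transpose_def vec_eq_iff\<close>)
  next
    case mne: False
    obtain j :: 'n where True by blast
    show ?thesis
    proof (cases "\<exists>k. k \<noteq> j")
      case True
      then obtain k where jk: "k \<noteq> j" by blast
      define al where "al = m1$j + m2$k"
      define be where "be = m1$k - m2$j"
      define lam where "lam = (if al = 0 \<and> be = 0 then 1 else be)"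
      define mu where "mu = (if al = 0 \<and> be = 0 then 0 else -al)"
      define N where "N = lam^2 + mu^2"
      have Npos: "N > 0" by (auto simp: N_def lam_def mu_def add_pos_nonneg sum_power2_gt_zero_iff)
      have lm: "lam * al + mu * be = 0" by (simp add: lam_def mu_def algebra_simps)
      define x where "x = lam *\<^sub>R axis j 1 + mu *\<^sub>R axis k (1::real)"
      define y where "y = (-mu) *\<^sub>R axis j 1 + lam *\<^sub>R axis k (1::real)"
      have xj: "x$j = lam" "x$k = mu" "y$j = -mu" "y$k = lam" using jk by (simp_all add: x_def y_def axis_def)
      have xy_m: "x \<bullet> m1 + y \<bullet> m2 = 0"
        using lm by (simp add: x_def y_def inner_add_left inner_axis' al_def be_def algebra_simps)
      have nx: "(norm x)^2 + (norm y)^2 = 2 * N"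
      proof -
        have e: "axis j 1 \<bullet> axis j (1::real) = 1" "axis k 1 \<bullet> axis k (1::real) = 1"
          "axis j 1 \<bullet> axis k (1::real) = 0" "axis k 1 \<bullet> axis j (1::real) = 0"
          using jk by (simp_all add: inner_axis_axis)
        have "x \<bullet> x = lam^2 + mu^2"
          unfolding x_def by (simp only: inner_add_left inner_add_right inner_scaleR_left inner_scaleR_right e)
            (simp add: power2_eq_square)
        moreover have "y \<bullet> y = lam^2 + mu^2"
          unfolding y_def by (simp only: inner_add_left inner_add_right inner_scaleR_left inner_scaleR_right e)
            (simp add: power2_eq_square)
        ultimately show ?thesis by (simp add: power2_norm_eq_inner N_def)
      qed
      define A where "A = \<bar>lam\<bar> + \<bar>mu\<bar> + 1"
      have A: "A > 0" "N \<le> A^2"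
      proof -
        have a: "0 \<le> \<bar>lam\<bar>" "0 \<le> \<bar>mu\<bar>" by simp_all
        thus "A > 0" unfolding A_def by linarith
        have "A^2 = \<bar>lam\<bar>^2 + \<bar>mu\<bar>^2 + (2*\<bar>lam\<bar>*\<bar>mu\<bar> + 2*\<bar>lam\<bar> + 2*\<bar>mu\<bar> + 1)"
          by (simp add: A_def power2_eq_square algebra_simps)
        moreover have "0 \<le> 2*\<bar>lam\<bar>*\<bar>mu\<bar>" by simp
        ultimately show "N \<le> A^2" using a unfolding N_def power2_abs by linarith
      qed
      define d where "d = \<epsilon> / (2 * A)"
      have d0: "d > 0" using A eps by (simp add: d_def)
      define c1 where "c1 = 2 * (lam * (p1$j + p2$k) - mu * (p2$j - p1$k))"
      define c0 where "c0 = p1$j*p2$k - p1$k*p2$j"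
      have "\<exists>s\<in>{d, d/2, d/3}. (4*N)* s^2 + c1* s + c0 \<noteq> 0"
        by (rule three_pt) (use Npos d0 in auto)
      then obtain s where s: "s \<in> {d, d/2, d/3}" and sD: "(4*N)* s^2 + c1* s + c0 \<noteq> 0"
        by blast
      define t1 where "t1 = s *\<^sub>R x"
      define t2 where "t2 = s *\<^sub>R y"
      have "(p1 + 2 *\<^sub>R t1)$j * (p2 + 2 *\<^sub>R t2)$k - (p1 + 2 *\<^sub>R t1)$k * (p2 + 2 *\<^sub>R t2)$j
          = (4*N)* s^2 + c1* s + c0"
        by (simp add: t1_def t2_def xj N_def c1_def c0_def power2_eq_square algebra_simps)
      hence det: "(p1 + 2 *\<^sub>R t1)$j * (p2 + 2 *\<^sub>R t2)$k - (p1 + 2 *\<^sub>R t1)$k * (p2 + 2 *\<^sub>R t2)$j \<noteq> 0"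
        using sD by simp
      have "t1 \<bullet> m1 + t2 \<bullet> m2 = s * (x \<bullet> m1 + y \<bullet> m2)" by (simp add: t1_def t2_def algebra_simps)
      hence tm: "t1 \<bullet> m1 + t2 \<bullet> m2 = 0" using xy_m by simp
      obtain X where X: "sym_real X" "X *v (p1 + 2 *\<^sub>R t1) = q1" "X *v (p2 + 2 *\<^sub>R t2) = q2"
        using solve2[OF jk[symmetric] det compat[OF tm]] by blast
      have s_le: "s^2 \<le> d^2" using s d0 by (auto simp: power2_eq_square mult_mono)
      have "(norm t1)^2 + (norm t2)^2 = s^2 * ((norm x)^2 + (norm y)^2)"
        by (simp add: t1_def t2_def power_mult_distrib algebra_simps)
      also have "\<dots> = s^2 * (2 * N)" using nx by simp
      also have "\<dots> \<le> d^2 * (2 * A^2)" using s_le A Npos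
        by (intro mult_mono) auto
      also have "\<dots> = \<epsilon>^2 / 2" using A by (simp add: d_def power2_eq_square field_simps)
      also have "\<dots> < \<epsilon>^2" using eps by simp
      finally show ?thesis using X by blast
    next
      case False
      hence one: "\<And>i. i = j" by blast
      have veq: "u = v" if "u$j = v$j" for u v :: "real^'n" using that one by (metis vec_eq_iff)
      have inn: "u \<bullet> v = u$j * v$j" for u v :: "real^'n"
      proof -
        have U: "UNIV = {j}" using one by auto
        show ?thesis by (simp only: inner_vec_def U) simp
      qed
      have mj: "(m2$j)^2 + (m1$j)^2 \<noteq> 0"
        using mne veq[of m1 0] veq[of m2 0] by (auto simp: sum_power2_eq_zero_iff)
      define A where "A = \<bar>m1$j\<bar> + \<bar>m2$j\<bar> + 1"
      have A: "A > 0" "(m1$j)^2 + (m2$j)^2 \<le> A^2"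
      proof -
        have a: "0 \<le> \<bar>m1$j\<bar>" "0 \<le> \<bar>m2$j\<bar>" by simp_all
        thus "A > 0" unfolding A_def by linarith
        have "A^2 = \<bar>m1$j\<bar>^2 + \<bar>m2$j\<bar>^2 + (2*\<bar>m1$j\<bar>*\<bar>m2$j\<bar> + 2*\<bar>m1$j\<bar> + 2*\<bar>m2$j\<bar> + 1)"
          by (simp add: A_def power2_eq_square algebra_simps)
        moreover have "0 \<le> 2*\<bar>m1$j\<bar>*\<bar>m2$j\<bar>" by simp
        ultimately show "(m1$j)^2 + (m2$j)^2 \<le> A^2" using a unfolding power2_abs by linarith
      qed
      define d where "d = \<epsilon> / (2 * A)"
      have d0: "d > 0" using A eps by (simp add: d_def)
      have "\<exists>s\<in>{d, d/2}. (p1$j + s*(-2*m2$j))^2 + (p2$j + s*(2*m1$j))^2 \<noteq> 0"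
      proof (rule two_pt)
        have eq: "(-2*m2$j)^2 + (2*m1$j)^2 = 4 * ((m2$j)^2 + (m1$j)^2)" by (simp add: power2_eq_square)
        have h: "4 * ((m2$j)^2 + (m1$j)^2) \<noteq> 0" using mj by (metis mult_eq_0_iff zero_neq_numeral)
        show "(-2*m2$j)^2 + (2*m1$j)^2 \<noteq> 0" using eq h by metis
      qed (use d0 in auto)
      then obtain s where s: "s \<in> {d, d/2}" and sD: "(p1$j + s*(-2*m2$j))^2 + (p2$j + s*(2*m1$j))^2 \<noteq> 0"
        by blast
      define t1 where "t1 = (-s * m2$j) *\<^sub>R axis j (1::real)"
      define t2 where "t2 = (s * m1$j) *\<^sub>R axis j (1::real)"
      have "((p1 + 2 *\<^sub>R t1)$j)^2 + ((p2 + 2 *\<^sub>R t2)$j)^2 \<noteq> 0"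
        using sD by (simp add: t1_def t2_def algebra_simps)
      moreover have tm: "t1 \<bullet> m1 + t2 \<bullet> m2 = 0" by (simp add: t1_def t2_def inn)
      ultimately obtain X where X: "sym_real X" "X *v (p1 + 2 *\<^sub>R t1) = q1" "X *v (p2 + 2 *\<^sub>R t2) = q2"
        using solve1[OF one _ compat[OF tm]] by blast
      have s_le: "s^2 \<le> d^2" using s d0 by (auto simp: power2_eq_square mult_mono)
      have "(norm t1)^2 + (norm t2)^2 = s^2 * ((m1$j)^2 + (m2$j)^2)"
        by (simp add: t1_def t2_def power_mult_distrib algebra_simps)
      also have "\<dots> \<le> d^2 * A^2" using s_le A
        by (intro mult_mono) auto
      also have "\<dots> = \<epsilon>^2 / 4" using A by (simp add: d_def power2_eq_square field_simps)
      also have "\<dots> < \<epsilon>^2" using eps by simp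
      finally show ?thesis using X by blast
    qed
  qed
  thus ?thesis by (simp add: p1_def p2_def q1_def q2_def m1_def m2_def)
qed



lemma key_cplx:
  fixes a b :: "complex^'n"
  assumes Y0: "Y0 > 0" and nab: "norm a = norm b" and eps: "\<epsilon> > 0"
  shows "\<exists>X. sym_real X \<and> norm (theta Y0 X *v a - b) < \<epsilon>"
proof -
  have nrm: "(norm (re_v a))^2 + (norm (im_v a))^2 = (norm (re_v b))^2 + (norm (im_v b))^2"
    using nab by (simp flip: norm_sq_cplx)
  obtain t1 t2 X where X: "sym_real X" and tn: "(norm t1)^2 + (norm t2)^2 < (\<epsilon>/2)^2"
    and e1: "X *v (re_v a + re_v b + 2 *\<^sub>R t1) = Y0 *\<^sub>R (im_v a - im_v b)"
    and e2: "X *v (im_v a + im_v b + 2 *\<^sub>R t2) = (-Y0) *\<^sub>R (re_v a - re_v b)"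
    using key_real[OF nrm, of "\<epsilon>/2" Y0] eps by auto
  define t where "t = cvec t1 t2"
  have "Ami Y0 X *v (a + t) = Apl Y0 X *v (b + t)"
  proof (rule cplx_eqI)
    have h2: "(X *v re_v a)$i + (X *v re_v b)$i + 2 * (X *v t1)$i = Y0 * (im_v a $ i - im_v b $ i)" for i
      using arg_cong[OF e1, of "\<lambda>v. v $ i"] by (simp add: matrix_vector_right_distrib matrix_vector_mult_scaleR)
    have h1: "(X *v im_v a)$i + (X *v im_v b)$i + 2 * (X *v t2)$i = -Y0 * (re_v a $ i - re_v b $ i)" for i
      using arg_cong[OF e2, of "\<lambda>v. v $ i"] by (simp add: matrix_vector_right_distrib matrix_vector_mult_scaleR)
    show "re_v (Ami Y0 X *v (a + t)) = re_v (Apl Y0 X *v (b + t))"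
    proof -
      have "(re_v (Ami Y0 X *v (a + t)))$i = (re_v (Apl Y0 X *v (b + t)))$i" for i
        using h1[of i] by (simp add: Ami_mult Apl_mult t_def matrix_vector_right_distrib algebra_simps)
      thus ?thesis by (simp add: vec_eq_iff)
    qed
    show "im_v (Ami Y0 X *v (a + t)) = im_v (Apl Y0 X *v (b + t))"
    proof -
      have "(im_v (Ami Y0 X *v (a + t)))$i = (im_v (Apl Y0 X *v (b + t)))$i" for i
        using h2[of i] by (simp add: Ami_mult Apl_mult t_def matrix_vector_right_distrib algebra_simps)
      thus ?thesis by (simp add: vec_eq_iff)
    qed
  qed
  hence sol: "theta Y0 X *v (a + t) = b + t" by (rule theta_solve[OF X Y0])
  have "theta Y0 X *v a - b = t - theta Y0 X *v t"
    using sol by (simp add: matrix_vector_right_distrib algebra_simps)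
  hence "norm (theta Y0 X *v a - b) \<le> norm t + norm (theta Y0 X *v t)"
    by (simp add: norm_triangle_ineq4)
  also have "\<dots> = 2 * norm t" using theta_isometry[OF X Y0] by simp
  also have "\<dots> < \<epsilon>"
  proof -
    have "(norm t)^2 < (\<epsilon>/2)^2" using tn by (simp add: t_def norm_sq_cplx)
    hence "norm t < \<epsilon>/2" by (rule power_less_imp_less_base) (use eps in simp)
    thus ?thesis by simp
  qed
  finally show ?thesis using X by blast
qed

lemma inv_of_ker:
  fixes A :: "'a::field^'n^'n"
  assumes "\<And>x. A *v x = 0 \<Longrightarrow> x = 0"
  shows "A ** matrix_inv A = mat 1 \<and> matrix_inv A ** A = mat 1"
proof -
  have "\<exists>B. B ** A = mat 1" using matrix_left_invertible_ker assms by blast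
  hence "invertible A" using invertible_left_inverse by blast
  hence "\<exists>A'. A ** A' = mat 1 \<and> A' ** A = mat 1" by (simp add: invertible_def)
  thus ?thesis unfolding matrix_inv_def by (rule someI_ex)
qed

lemma transpose_add: "transpose (A + B) = transpose A + transpose (B::real^'n^'n)"
  by (simp add: transpose_def vec_eq_iff)
lemma transpose_diff: "transpose (A - B) = transpose A - transpose (B::real^'n^'n)"
  by (simp add: transpose_def vec_eq_iff)

lemma sqrt_facts:
  fixes P :: "real^'n^'n"
  assumes pd: "pos_def_real P"
  shows "pd_sqrt P ** inv_sqrt P = mat 1" "inv_sqrt P ** pd_sqrt P = mat 1"
    "transpose (inv_sqrt P) = inv_sqrt P" "transpose (pd_sqrt P) = pd_sqrt P"
proof -
  let ?R = "pd_sqrt P"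
  have R: "pos_def_real ?R" using pd_sqrt[OF pd] by blast
  have "?R *v x = 0 \<Longrightarrow> x = 0" for x
    using R unfolding pos_def_real_def by (metis inner_zero_right less_irrefl)
  hence inv: "?R ** inv_sqrt P = mat 1" "inv_sqrt P ** ?R = mat 1"
    using inv_of_ker[of ?R] by (auto simp: inv_sqrt_def)
  thus "?R ** inv_sqrt P = mat 1" "inv_sqrt P ** ?R = mat 1" by auto
  have tR: "transpose ?R = ?R" using R by (simp add: pos_def_real_def sym_real_def)
  thus "transpose ?R = ?R" .
  have "transpose (inv_sqrt P) ** ?R = mat 1"
    using arg_cong[OF inv(1), of transpose] tR by (simp add: matrix_transpose_mul)
  hence "transpose (inv_sqrt P) = transpose (inv_sqrt P) ** (?R ** inv_sqrt P)"
    using inv(1) by simp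
  also have "\<dots> = inv_sqrt P" using \<open>transpose (inv_sqrt P) ** ?R = mat 1\<close>
    by (simp add: matrix_mul_assoc)
  finally show "transpose (inv_sqrt P) = inv_sqrt P" .
qed

lemma Bbar_sym:
  assumes pd: "pos_def_real P" and sQ: "sym_real Q" and sB: "sym_real B"
  shows "sym_real (Bbar Y0 P Q B)"
  using sqrt_facts[OF pd] sQ sB
  by (simp add: sym_real_def Bbar_def transpose_scalar matrix_transpose_mul transpose_add matrix_mul_assoc)

lemma Bbar_surj:
  assumes pd: "pos_def_real P" and sQ: "sym_real Q" and sX: "sym_real X" and Y0: "Y0 > 0"
  shows "\<exists>B. sym_real B \<and> Bbar Y0 P Q B = X"
proof -
  let ?R = "pd_sqrt P" and ?S = "inv_sqrt P"
  note f = sqrt_facts[OF pd]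
  define B where "B = (1/Y0) *\<^sub>R (?R ** X ** ?R) - Q"
  have "sym_real B" using f sQ sX
    by (simp add: B_def sym_real_def transpose_scalar matrix_transpose_mul transpose_diff matrix_mul_assoc)
  moreover have "Bbar Y0 P Q B = X"
  proof -
    have "?S ** (B + Q) ** ?S = (1/Y0) *\<^sub>R ((?S ** ?R) ** X ** (?R ** ?S))"
      by (simp add: B_def scalar_matrix_assoc matrix_scalar_ac matrix_mul_assoc)
    also have "\<dots> = (1/Y0) *\<^sub>R X" using f by simp
    finally show ?thesis using Y0 by (simp add: Bbar_def)
  qed
  ultimately show ?thesis by blast
qed

lemma herm_bound: "cmod (\<Sum>i\<in>UNIV. cnj (g $ i) * v $ i) \<le> norm g * norm (v::complex^'n)"
proof -
  have "cmod (\<Sum>i\<in>UNIV. cnj (g $ i) * v $ i) \<le> (\<Sum>i\<in>UNIV. cmod (cnj (g $ i) * v $ i))"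
    by (rule norm_sum)
  also have "\<dots> = (\<Sum>i\<in>UNIV. \<bar>cmod (g $ i)\<bar> * \<bar>cmod (v $ i)\<bar>)" by (simp add: norm_mult)
  also have "\<dots> \<le> L2_set (\<lambda>i. cmod (g $ i)) UNIV * L2_set (\<lambda>i. cmod (v $ i)) UNIV"
    by (rule L2_set_mult_ineq)
  also have "\<dots> = norm g * norm v" by (simp add: norm_vec_def)
  finally show ?thesis .
qed

lemma herm_self: "(\<Sum>i\<in>UNIV. cnj (v $ i) * v $ i) = complex_of_real ((norm (v::complex^'n))^2)"
proof -
  have "(\<Sum>i\<in>UNIV. cnj (v $ i) * v $ i) = (\<Sum>i\<in>UNIV. complex_of_real ((cmod (v $ i))^2))"
    by (rule sum.cong) (simp_all, metis complex_norm_square mult.commute of_real_power)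
  also have "\<dots> = complex_of_real (\<Sum>i\<in>UNIV. (cmod (v $ i))^2)" by simp
  also have "(\<Sum>i\<in>UNIV. (cmod (v $ i))^2) = (norm v)^2"
    by (simp add: norm_vec_def L2_set_def sum_nonneg)
  finally show ?thesis .
qed

lemma norm_axis_c: "norm (axis j (1::complex)) = 1"
proof -
  have r: "re_v (axis j (1::complex)) = axis j 1" by (simp add: re_v_def axis_def vec_eq_iff)
  have i: "im_v (axis j (1::complex)) = 0" by (simp add: im_v_def axis_def vec_eq_iff)
  have "(norm (axis j (1::complex)))^2 = 1"
    by (simp add: norm_sq_cplx r i)
  thus ?thesis by (simp add: power2_eq_1_iff)
qed

lemma herm_attain: "\<exists>g::complex^'n. norm g = 1 \<and> cmod (\<Sum>i\<in>UNIV. cnj (g $ i) * v $ i) = norm v"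
proof (cases "v = 0")
  case True
  obtain j :: 'n where True by blast
  show ?thesis using True norm_axis_c[of j] by (intro exI[of _ "axis j 1"]) simp
next
  case False
  define g where "g = (1 / norm v) *\<^sub>R v"
  have "(\<Sum>i\<in>UNIV. cnj (g $ i) * v $ i) = complex_of_real (1 / norm v) * (\<Sum>i\<in>UNIV. cnj (v $ i) * v $ i)"
  proof -
    have "cnj (g $ i) * v $ i = complex_of_real (1 / norm v) * (cnj (v $ i) * v $ i)" for i
      by (simp only: g_def vector_scaleR_component) (simp add: scaleR_conv_of_real mult.assoc)
    thus ?thesis by (simp add: sum_distrib_left)
  qed
  also have "\<dots> = complex_of_real (norm v)" using False by (simp add: herm_self power2_eq_square)
  finally show ?thesis using False by (intro exI[of _ g]) (simp add: g_def)
qed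

lemma M_mult: "(HRT + HRI ** T ** HIT) *v w = HRT *v w + HRI *v (T *v (HIT *v w))"
  by (simp add: matrix_vector_mult_add_rdistrib matrix_vector_mul_assoc matrix_mul_assoc)

theorem mainTheorem5:
  fixes HRT :: "complex^'t^'r" and HRI :: "complex^'i^'r" and HIT :: "complex^'t^'i"
    and Y0 PT :: real and P Q :: "real^'i^'i"
  assumes "Y0 > 0" and "PT > 0" and "pos_def_real P" and "sym_real Q"
  shows "\<exists>m. m \<in> {(norm (HRT *v w + HRI *v u))\<^sup>2 | u w.
                     norm u = norm (HIT *v w) \<and> norm w = 1}
           \<and> (\<forall>x \<in> {(norm (HRT *v w + HRI *v u))\<^sup>2 | u w.
                     norm u = norm (HIT *v w) \<and> norm w = 1}. x \<le> m)
           \<and> bdd_above {PT * (cmod (herm_form g (HRT + HRI ** Theta_bar Y0 P Q B ** HIT) w))\<^sup>2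
                        | B w g. sym_real B \<and> norm w = 1 \<and> norm g = 1}
           \<and> Sup {PT * (cmod (herm_form g (HRT + HRI ** Theta_bar Y0 P Q B ** HIT) w))\<^sup>2
                  | B w g. sym_real B \<and> norm w = 1 \<and> norm g = 1} = PT * m"
proof -
  note Y0 = assms(1) and PT = assms(2) and pd = assms(3) and sQ = assms(4)
  define f :: "(complex^'i) \<times> (complex^'t) \<Rightarrow> real" where
    "f = (\<lambda>p. (norm (HRT *v snd p + HRI *v fst p))^2)"
  define K :: "((complex^'i) \<times> (complex^'t)) set" where
    "K = {p. norm (fst p) = norm (HIT *v snd p) \<and> norm (snd p) = 1}"
  define U where "U = {(norm (HRT *v w + HRI *v u))\<^sup>2 | u w. norm u = norm (HIT *v w) \<and> norm w = 1}"
  have U_eq: "U = f ` K"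
    unfolding U_def f_def K_def by (auto simp: image_iff) (metis fst_conv snd_conv)+
  have bl1: "bounded_linear (\<lambda>p::(complex^'i) \<times> (complex^'t). HIT *v snd p)"
    by (rule bounded_linear_compose[OF matrix_vector_mul_bounded_linear bounded_linear_snd])
  have bl2: "bounded_linear (\<lambda>p::(complex^'i) \<times> (complex^'t). HRT *v snd p + HRI *v fst p)"
    by (intro bounded_linear_add bounded_linear_compose[OF matrix_vector_mul_bounded_linear bounded_linear_snd]
        bounded_linear_compose[OF matrix_vector_mul_bounded_linear bounded_linear_fst])
  have "closed K" unfolding K_def
    by (intro closed_Collect_conj closed_Collect_eq continuous_intros linear_continuous_on[OF bl1])
  moreover have "bounded K"
  proof -
    obtain C where C: "\<And>w. norm (HIT *v w) \<le> norm w * C"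
      using bounded_linear.bounded[OF matrix_vector_mul_bounded_linear[of HIT]] by blast
    have "K \<subseteq> cball 0 C \<times> cball 0 1" unfolding K_def using C by (auto simp: mem_Times_iff) (metis mult_1)
    moreover have "bounded (cball (0::complex^'i) C \<times> cball (0::complex^'t) 1)"
      by (intro bounded_Times bounded_cball)
    ultimately show ?thesis using bounded_subset by blast
  qed
  ultimately have cK: "compact K" by (simp add: compact_eq_bounded_closed)
  obtain j :: 't where True by blast
  have "(HIT *v axis j 1, axis j 1) \<in> K" by (simp add: K_def norm_axis_c)
  hence neK: "K \<noteq> {}" by blast
  have "continuous_on K f" unfolding f_def
    by (intro continuous_intros linear_continuous_on[OF bl2])
  then obtain pm where pmK: "pm \<in> K" and pmax: "\<And>q. q \<in> K \<Longrightarrow> f q \<le> f pm"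
    using continuous_attains_sup[OF cK neK] by blast
  define m where "m = f pm"
  obtain u0 w0 where pm: "pm = (u0, w0)" by (cases pm)
  have u0: "norm u0 = norm (HIT *v w0)" and w0: "norm w0 = 1" using pmK by (auto simp: K_def pm)
  have mU: "m \<in> U" unfolding U_eq m_def using pmK by blast
  have Um: "\<forall>x\<in>U. x \<le> m" unfolding U_eq m_def using pmax by blast
  define L where "L = {PT * (cmod (herm_form g (HRT + HRI ** Theta_bar Y0 P Q B ** HIT) w))\<^sup>2
                  | B w g. sym_real B \<and> norm w = 1 \<and> norm g = 1}"
  have Lub: "x \<le> PT * m" if "x \<in> L" for x
  proof -
    obtain B w g where x: "x = PT * (cmod (herm_form g (HRT + HRI ** Theta_bar Y0 P Q B ** HIT) w))\<^sup>2"
      and sB: "sym_real B" and nw: "norm w = 1" and ng: "norm g = 1"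
      using \<open>x \<in> L\<close> unfolding L_def by blast
    define X where "X = Bbar Y0 P Q B"
    have sX: "sym_real X" using Bbar_sym[OF pd sQ sB] by (simp add: X_def)
    define v where "v = HRT *v w + HRI *v (theta Y0 X *v (HIT *v w))"
    have hv: "herm_form g (HRT + HRI ** Theta_bar Y0 P Q B ** HIT) w = (\<Sum>i\<in>UNIV. cnj (g $ i) * v $ i)"
      by (simp add: herm_form_def Theta_bar_theta X_def M_mult v_def)
    have "cmod (herm_form g (HRT + HRI ** Theta_bar Y0 P Q B ** HIT) w) \<le> norm v"
      using herm_bound[of g v] ng hv by simp
    hence "(cmod (herm_form g (HRT + HRI ** Theta_bar Y0 P Q B ** HIT) w))\<^sup>2 \<le> (norm v)^2"
      by (simp add: power_mono)
    also have "(norm v)^2 \<in> U" unfolding U_def v_def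
      using theta_isometry[OF sX Y0] nw by blast
    hence "(norm v)^2 \<le> m" using Um by blast
    finally show ?thesis using PT x by simp
  qed
  have sym0: "sym_real (0::real^'i^'i)" by (simp add: sym_real_def transpose_def vec_eq_iff)
  obtain j' :: 'r where True by blast
  have neL: "L \<noteq> {}" unfolding L_def using sym0 norm_axis_c[of j] norm_axis_c[of j'] by blast
  have bddL: "bdd_above L" using Lub by (auto simp: bdd_above_def)
  have supL: "Sup L = PT * m"
  proof (rule cSup_eq_non_empty[OF neL Lub])
    fix y assume ub: "\<And>x. x \<in> L \<Longrightarrow> x \<le> y"
    show "PT * m \<le> y"
    proof (rule ccontr)
      assume "\<not> PT * m \<le> y"
      hence ylt: "y < PT * m" by simp
      define e where "e = (PT * m - y) / PT"
      have e0: "e > 0" using ylt PT by (simp add: e_def)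
      define F where "F = (\<lambda>u. (norm (HRT *v w0 + HRI *v u))^2)"
      have "continuous (at u0) F" unfolding F_def
        by (intro continuous_intros linear_continuous_at matrix_vector_mul_bounded_linear)
      then obtain d where d0: "d > 0" and dF: "\<And>u. dist u u0 < d \<Longrightarrow> dist (F u) (F u0) < e"
        unfolding continuous_at_eps_delta using e0 by blast
      define a where "a = HIT *v w0"
      obtain X where sX: "sym_real X" and Xa: "norm (theta Y0 X *v a - u0) < d"
        using key_cplx[OF Y0 _ d0, of a u0] u0 by (auto simp: a_def)
      obtain B where sB: "sym_real B" and BX: "Bbar Y0 P Q B = X" using Bbar_surj[OF pd sQ sX Y0] by blast
      define v where "v = HRT *v w0 + HRI *v (theta Y0 X *v a)"
      obtain g :: "complex^'r" where ng: "norm g = 1" and gv: "cmod (\<Sum>i\<in>UNIV. cnj (g $ i) * v $ i) = norm v"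
        using herm_attain by blast
      have hv: "herm_form g (HRT + HRI ** Theta_bar Y0 P Q B ** HIT) w0 = (\<Sum>i\<in>UNIV. cnj (g $ i) * v $ i)"
        by (simp add: herm_form_def Theta_bar_theta BX M_mult v_def a_def)
      have inL: "PT * (norm v)^2 \<in> L" unfolding L_def using sB w0 ng hv gv by force
      have "dist (F (theta Y0 X *v a)) (F u0) < e" using dF Xa by (simp add: dist_norm)
      moreover have "F u0 = m" by (simp add: F_def m_def f_def pm)
      moreover have "F (theta Y0 X *v a) = (norm v)^2" by (simp add: F_def v_def)
      ultimately have "(norm v)^2 > m - e" by (simp add: dist_real_def abs_less_iff)
      hence "PT * (norm v)^2 > PT * (m - e)" using PT by simp
      also have "PT * (m - e) = y" using PT by (simp add: e_def field_simps)
      finally have "y < PT * (norm v)^2" .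
      thus False using ub[OF inL] by simp
    qed
  qed
  show ?thesis
    using mU Um bddL supL unfolding U_def L_def by blast
qed

end
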